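(* Let $G=(V,E)$ be a connected simple graph with a set-valued metric $\Omega(-,-)$ taking values in subsets of a finite set $\Omega$, and suppose there is an equivariant involution $x\mapsto -x$ on $V$. Then the diameter of $G$ is at least $|\Omega|$.
   Context: For a connected simple graph $G=(V,E)$ and a set $\Omega$, a set-valued metric on $G$ is a function $\Omega(-,-):V\times V\to 2^{\Omega}$ such that $\Omega(x,y)=\Omega(y,x)$ for all $x,y$; $|\Omega(x,y)|=1$ whenever $\{x,y\}\in E$; and $\Omega(x,z)=\Omega(x,y)\triangle\Omega(y,z)$ for all $x,y,z$, where $\triangle$ is symmetric difference. An involution $x\mapsto -x$ on $V$ is equivariant if $\Omega(x,-y)=\Omega\setminus\Omega(x,y)$ for all $x,y\in V$. *)

theory Defs
  imports Main "HOL-Library.Extended_Nat"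
begin

definition simple_graph :: "'a set \<Rightarrow> 'a set set \<Rightarrow> bool" where
  "simple_graph V E \<longleftrightarrow> (\<forall>e\<in>E. \<exists>x y. e = {x, y} \<and> x \<noteq> y \<and> x \<in> V \<and> y \<in> V)"

definition is_walk :: "'a set \<Rightarrow> 'a set set \<Rightarrow> 'a list \<Rightarrow> bool" where
  "is_walk V E p \<longleftrightarrow> p \<noteq> [] \<and> set p \<subseteq> V \<and>
     (\<forall>i. Suc i < length p \<longrightarrow> {p ! i, p ! Suc i} \<in> E)"

definition connected_graph :: "'a set \<Rightarrow> 'a set set \<Rightarrow> bool" where
  "connected_graph V E \<longleftrightarrow> V \<noteq> {} \<and>
     (\<forall>x\<in>V. \<forall>y\<in>V. \<exists>p. is_walk V E p \<and> hd p = x \<and> last p = y)"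

definition graph_dist :: "'a set \<Rightarrow> 'a set set \<Rightarrow> 'a \<Rightarrow> 'a \<Rightarrow> enat" where
  "graph_dist V E x y =
     (INF p \<in> {p. is_walk V E p \<and> hd p = x \<and> last p = y}. enat (length p - 1))"

definition diameter :: "'a set \<Rightarrow> 'a set set \<Rightarrow> enat" where
  "diameter V E = (SUP x\<in>V. SUP y\<in>V. graph_dist V E x y)"

definition set_valued_metric ::
  "'a set \<Rightarrow> 'a set set \<Rightarrow> 'b set \<Rightarrow> ('a \<Rightarrow> 'a \<Rightarrow> 'b set) \<Rightarrow> bool" where
  "set_valued_metric V E Om d \<longleftrightarrow>
     (\<forall>x\<in>V. \<forall>y\<in>V. d x y \<subseteq> Om) \<and>
     (\<forall>x\<in>V. \<forall>y\<in>V. d x y = d y x) \<and>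
     (\<forall>x\<in>V. \<forall>y\<in>V. {x, y} \<in> E \<longrightarrow> card (d x y) = 1) \<and>
     (\<forall>x\<in>V. \<forall>y\<in>V. \<forall>z\<in>V. d x z = (d x y - d y z) \<union> (d y z - d x y))"

definition equivariant_involution ::
  "'a set \<Rightarrow> 'b set \<Rightarrow> ('a \<Rightarrow> 'a \<Rightarrow> 'b set) \<Rightarrow> ('a \<Rightarrow> 'a) \<Rightarrow> bool" where
  "equivariant_involution V Om d neg \<longleftrightarrow>
     (\<forall>x\<in>V. neg x \<in> V \<and> neg (neg x) = x) \<and>
     (\<forall>x\<in>V. \<forall>y\<in>V. d x (neg y) = Om - d x y)"

end

theory Submission
  imports Defs
begin

lemma walk_card:
  assumes M: "set_valued_metric V E Om d" and F: "finite Om"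
  shows "is_walk V E p \<Longrightarrow> card (d (hd p) (last p)) \<le> length p - 1"
proof (induction p)
  case Nil then show ?case by (simp add: is_walk_def)
next
  case (Cons a q)
  have aV: "a \<in> V" using Cons.prems by (simp add: is_walk_def)
  show ?case
  proof (cases "q = []")
    case True
    have "d a a = {}" using M aV unfolding set_valued_metric_def by blast
    then show ?thesis using True by simp
  next
    case False
    have wq: "is_walk V E q" using Cons.prems False
      unfolding is_walk_def by (auto simp: nth_Cons_Suc)
    have e: "{a, hd q} \<in> E" using Cons.prems False
      unfolding is_walk_def by (metis hd_conv_nth length_Cons length_greater_0_conv nat.simps(3) nth_Cons_0 nth_Cons_Suc zero_less_Suc Suc_less_eq)
    have hV: "hd q \<in> V" "last q \<in> V" using wq False unfolding is_walk_def by auto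
    have c1: "card (d a (hd q)) = 1" using M aV hV e unfolding set_valued_metric_def by blast
    have tri: "d a (last q) = (d a (hd q) - d (hd q) (last q)) \<union> (d (hd q) (last q) - d a (hd q))"
      using M aV hV unfolding set_valued_metric_def by blast
    have f1: "finite (d a (hd q))" "finite (d (hd q) (last q))"
      using M aV hV F unfolding set_valued_metric_def by (meson finite_subset)+
    have "card (d a (last q)) \<le> card (d a (hd q) \<union> d (hd q) (last q))"
      unfolding tri by (rule card_mono) (use f1 in auto)
    also have "\<dots> \<le> card (d a (hd q)) + card (d (hd q) (last q))" by (rule card_Un_le)
    also have "\<dots> \<le> 1 + (length q - 1)" using c1 Cons.IH[OF wq] by simp
    finally show ?thesis using False by (simp add: last.simps)
  qed
qed

theorem proposition3p8:
  fixes V :: "'a set" and E :: "'a set set" and Om :: "'b set"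
    and d :: "'a \<Rightarrow> 'a \<Rightarrow> 'b set" and neg :: "'a \<Rightarrow> 'a"
  assumes "simple_graph V E"
    and "connected_graph V E"
    and "finite Om"
    and "set_valued_metric V E Om d"
    and "equivariant_involution V Om d neg"
  shows "enat (card Om) \<le> diameter V E"
proof -
  obtain x where xV: "x \<in> V" using assms(2) unfolding connected_graph_def by auto
  have nV: "neg x \<in> V" using assms(5) xV unfolding equivariant_involution_def by blast
  have "d x x = {}" using assms(4) xV unfolding set_valued_metric_def by blast
  then have dx: "d x (neg x) = Om" using assms(5) xV unfolding equivariant_involution_def by auto
  have "enat (card Om) \<le> graph_dist V E x (neg x)"
    unfolding graph_dist_def
  proof (rule INF_greatest)
    fix p assume "p \<in> {p. is_walk V E p \<and> hd p = x \<and> last p = neg x}"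
    then have "is_walk V E p" "hd p = x" "last p = neg x" by auto
    with walk_card[OF assms(4) assms(3)] dx show "enat (card Om) \<le> enat (length p - 1)" by force
  qed
  also have "\<dots> \<le> diameter V E" unfolding diameter_def
    by (meson SUP_upper2 xV nV order_refl)
  finally show ?thesis .
qed

end
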